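(* Let $\Phi$ be a nonempty finite set of Boolean formulas built from variables and the constants $\mathrm{True},\mathrm{False}$ using $\wedge$, $\vee$, $\neg$, and let $X$ be the set of variables occurring in $\Phi$. Assume $\Phi$ is overall read-once, i.e., every variable of $X$ occurs exactly once in total across all the formulas of $\Phi$, and that every $\phi\in\Phi$ is non-simplifiable, i.e., $\phi$ is either one of the constants $\mathrm{True}$ or $\mathrm{False}$, or contains no occurrence of a constant. Then $\Phi$ is evasive (with respect to $X$), i.e., every BDD for $\Phi$ has depth $|X|$. *)

theory Defs
  imports Main
begin

datatype 'v form = Var 'v | TT | FF | And "'v form" "'v form" | Or "'v form" "'v form" | Neg "'v form"

fun eval :: "('v \<Rightarrow> bool) \<Rightarrow> 'v form \<Rightarrow> bool" where
  "eval \<sigma> (Var x) = \<sigma> x"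
| "eval \<sigma> TT = True"
| "eval \<sigma> FF = False"
| "eval \<sigma> (And a b) = (eval \<sigma> a \<and> eval \<sigma> b)"
| "eval \<sigma> (Or a b) = (eval \<sigma> a \<or> eval \<sigma> b)"
| "eval \<sigma> (Neg a) = (\<not> eval \<sigma> a)"

fun fvars :: "'v form \<Rightarrow> 'v set" where
  "fvars (Var x) = {x}"
| "fvars TT = {}"
| "fvars FF = {}"
| "fvars (And a b) = fvars a \<union> fvars b"
| "fvars (Or a b) = fvars a \<union> fvars b"
| "fvars (Neg a) = fvars a"

fun occ :: "'v \<Rightarrow> 'v form \<Rightarrow> nat" where
  "occ x (Var y) = (if x = y then 1 else 0)"
| "occ x TT = 0"
| "occ x FF = 0"
| "occ x (And a b) = occ x a + occ x b"
| "occ x (Or a b) = occ x a + occ x b"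
| "occ x (Neg a) = occ x a"

fun has_const :: "'v form \<Rightarrow> bool" where
  "has_const (Var x) = False"
| "has_const TT = True"
| "has_const FF = True"
| "has_const (And a b) = (has_const a \<or> has_const b)"
| "has_const (Or a b) = (has_const a \<or> has_const b)"
| "has_const (Neg a) = has_const a"

definition vars_of :: "'v form set \<Rightarrow> 'v set" where
  "vars_of \<Phi> = (\<Union>\<phi>\<in>\<Phi>. fvars \<phi>)"

definition overall_read_once :: "'v form set \<Rightarrow> bool" where
  "overall_read_once \<Phi> \<longleftrightarrow> (\<forall>x\<in>vars_of \<Phi>. (\<Sum>\<phi>\<in>\<Phi>. occ x \<phi>) = 1)"

definition non_simplifiable :: "'v form \<Rightarrow> bool" where
  "non_simplifiable \<phi> \<longleftrightarrow> \<phi> = TT \<or> \<phi> = FF \<or> \<not> has_const \<phi>"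

section \<open>Binary decision diagrams (unfolded to decision trees)\<close>

datatype ('v, 'o) bdd = Leaf 'o | Node 'v "('v, 'o) bdd" "('v, 'o) bdd"

fun run :: "('v \<Rightarrow> bool) \<Rightarrow> ('v, 'o) bdd \<Rightarrow> 'o" where
  "run \<sigma> (Leaf o') = o'"
| "run \<sigma> (Node x lo hi) = (if \<sigma> x then run \<sigma> hi else run \<sigma> lo)"

fun tvars :: "('v, 'o) bdd \<Rightarrow> 'v set" where
  "tvars (Leaf _) = {}"
| "tvars (Node x lo hi) = insert x (tvars lo \<union> tvars hi)"

fun path_read_once :: "('v, 'o) bdd \<Rightarrow> bool" where
  "path_read_once (Leaf _) = True"
| "path_read_once (Node x lo hi) =
     (x \<notin> tvars lo \<and> x \<notin> tvars hi \<and> path_read_once lo \<and> path_read_once hi)"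

fun depth :: "('v, 'o) bdd \<Rightarrow> nat" where
  "depth (Leaf _) = 0"
| "depth (Node x lo hi) = Suc (max (depth lo) (depth hi))"

definition is_bdd_for :: "'v form set \<Rightarrow> 'v set \<Rightarrow> ('v, 'v form \<Rightarrow> bool) bdd \<Rightarrow> bool" where
  "is_bdd_for \<Phi> X B \<longleftrightarrow> tvars B \<subseteq> X \<and> path_read_once B \<and>
     (\<forall>\<sigma>. \<forall>\<phi>\<in>\<Phi>. run \<sigma> B \<phi> = eval \<sigma> \<phi>)"

definition evasive :: "'v form set \<Rightarrow> 'v set \<Rightarrow> bool" where
  "evasive \<Phi> X \<longleftrightarrow> (\<forall>B. is_bdd_for \<Phi> X B \<longrightarrow> depth B = card X)"

end

theory Submission
  imports Defs
begin

lemma finite_fvars[simp]: "finite (fvars \<phi>)"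
  by (induction \<phi>) auto

lemma fvars_occ: "x \<in> fvars \<phi> \<longleftrightarrow> occ x \<phi> > 0"
  by (induction \<phi>) auto

lemma eval_cong: "(\<forall>y\<in>fvars \<phi>. \<sigma> y = \<tau> y) \<Longrightarrow> eval \<sigma> \<phi> = eval \<tau> \<phi>"
  by (induction \<phi>) auto

lemma run_cong: "(\<forall>y\<in>tvars B. \<sigma> y = \<tau> y) \<Longrightarrow> run \<sigma> B = run \<tau> B"
  by (induction B) auto

lemma finite_tvars[simp]: "finite (tvars B)"
  by (induction B) auto

lemma ro_split: "\<forall>y. occ y a + occ y b \<le> (1::nat) \<Longrightarrow> (\<forall>y. occ y a \<le> 1) \<and> (\<forall>y. occ y b \<le> 1)"
  using add_leD1 add_leD2 by blast

lemma fvars_nonempty: "\<not> has_const \<phi> \<Longrightarrow> fvars \<phi> \<noteq> {}"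
  by (induction \<phi>) auto

lemma depth_le: "path_read_once B \<Longrightarrow> depth B \<le> card (tvars B)"
proof (induction B)
  case (Leaf x)
  then show ?case by simp
next
  case (Node x lo hi)
  have a: "card (tvars lo) \<le> card (tvars lo \<union> tvars hi)" by (rule card_mono) auto
  have b: "card (tvars hi) \<le> card (tvars lo \<union> tvars hi)" by (rule card_mono) auto
  have "depth lo \<le> card (tvars lo)" using Node.IH(1) Node.prems by simp
  moreover have "depth hi \<le> card (tvars hi)" using Node.IH(2) Node.prems by simp
  ultimately have "depth lo \<le> card (tvars lo \<union> tvars hi)" "depth hi \<le> card (tvars lo \<union> tvars hi)"
    using a b by linarith+
  moreover have "x \<notin> tvars lo \<union> tvars hi" using Node by simp
  ultimately show ?case by simp
qed

lemma nonconst: "\<not> has_const \<phi> \<Longrightarrow> (\<forall>y. occ y \<phi> \<le> 1) \<Longrightarrow> \<exists>\<sigma>. eval \<sigma> \<phi> = b"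
proof (induction \<phi> arbitrary: b)
  case (Var x)
  then show ?case by (rule_tac x="\<lambda>_. b" in exI) simp
next
  case TT
  then show ?case by simp
next
  case FF
  then show ?case by simp
next
  case (And p q)
  have dis: "\<forall>y\<in>fvars p. y \<notin> fvars q"
  proof
    fix y assume "y \<in> fvars p"
    then have "occ y p > 0" by (simp add: fvars_occ)
    moreover have "occ y p + occ y q \<le> 1" using And.prems(2)[rule_format, of y] by simp
    ultimately show "y \<notin> fvars q" by (simp add: fvars_occ)
  qed
  have ro: "\<forall>y. occ y p \<le> 1" "\<forall>y. occ y q \<le> 1"
    using ro_split[of p q] And.prems(2) by simp_all
  have nc: "\<not> has_const p" "\<not> has_const q" using And.prems(1) by auto
  have hp: "\<And>b. \<exists>\<sigma>. eval \<sigma> p = b" by (rule And.IH(1)[OF nc(1) ro(1)])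
  have hq: "\<And>b. \<exists>\<sigma>. eval \<sigma> q = b" by (rule And.IH(2)[OF nc(2) ro(2)])
  show ?case
  proof (cases b)
    case True
    obtain s1 where s1: "eval s1 p = True" using hp by blast
    obtain s2 where s2: "eval s2 q = True" using hq by blast
    let ?s = "\<lambda>y. if y \<in> fvars p then s1 y else s2 y"
    have "eval ?s p = eval s1 p" by (rule eval_cong) auto
    moreover have "eval ?s q = eval s2 q" by (rule eval_cong) (use dis in auto)
    ultimately show ?thesis using s1 s2 True by (rule_tac x="?s" in exI) simp
  next
    case False
    obtain s1 where s1: "eval s1 p = False" using hp by blast
    then show ?thesis using False by (rule_tac x=s1 in exI) simp
  qed
next
  case (Or p q)
  have dis: "\<forall>y\<in>fvars p. y \<notin> fvars q"
  proof
    fix y assume "y \<in> fvars p"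
    then have "occ y p > 0" by (simp add: fvars_occ)
    moreover have "occ y p + occ y q \<le> 1" using Or.prems(2)[rule_format, of y] by simp
    ultimately show "y \<notin> fvars q" by (simp add: fvars_occ)
  qed
  have ro: "\<forall>y. occ y p \<le> 1" "\<forall>y. occ y q \<le> 1"
    using ro_split[of p q] Or.prems(2) by simp_all
  have nc: "\<not> has_const p" "\<not> has_const q" using Or.prems(1) by auto
  have hp: "\<And>b. \<exists>\<sigma>. eval \<sigma> p = b" by (rule Or.IH(1)[OF nc(1) ro(1)])
  have hq: "\<And>b. \<exists>\<sigma>. eval \<sigma> q = b" by (rule Or.IH(2)[OF nc(2) ro(2)])
  show ?case
  proof (cases b)
    case False
    obtain s1 where s1: "eval s1 p = False" using hp by blast
    obtain s2 where s2: "eval s2 q = False" using hq by blast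
    let ?s = "\<lambda>y. if y \<in> fvars p then s1 y else s2 y"
    have "eval ?s p = eval s1 p" by (rule eval_cong) auto
    moreover have "eval ?s q = eval s2 q" by (rule eval_cong) (use dis in auto)
    ultimately show ?thesis using s1 s2 False by (rule_tac x="?s" in exI) simp
  next
    case True
    obtain s1 where s1: "eval s1 p = True" using hp by blast
    then show ?thesis using True by (rule_tac x=s1 in exI) simp
  qed
next
  case (Neg p)
  have "\<exists>s. eval s p = (\<not> b)" using Neg.IH Neg.prems by simp
  then obtain s where "eval s p = (\<not> b)" by blast
  then show ?case by (rule_tac x=s in exI) simp
qed

definition cst :: "bool \<Rightarrow> 'v form" where "cst b = (if b then TT else FF)"

lemma cst_simps[simp]: "fvars (cst b) = {}" "eval \<sigma> (cst b) = b" "occ y (cst b) = 0"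
  by (auto simp: cst_def)

lemma reduce:
  "\<not> has_const \<phi> \<Longrightarrow> (\<forall>y. occ y \<phi> \<le> 1) \<Longrightarrow> x \<in> fvars \<phi> \<Longrightarrow>
   \<exists>c \<phi>'. fvars \<phi>' = fvars \<phi> - {x} \<and> (fvars \<phi>' \<noteq> {} \<longrightarrow> \<not> has_const \<phi>') \<and>
     (fvars \<phi>' = {} \<longrightarrow> \<phi>' = cst b) \<and> (\<forall>y. occ y \<phi>' \<le> occ y \<phi>) \<and>
     (\<forall>\<sigma>. \<sigma> x = c \<longrightarrow> eval \<sigma> \<phi>' = eval \<sigma> \<phi>)"
proof (induction \<phi> arbitrary: b)
  case (Var y)
  then show ?case by (rule_tac x=b in exI, rule_tac x="cst b" in exI) auto
next
  case TT
  then show ?case by simp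
next
  case FF
  then show ?case by simp
next
  case (And p q)
  have ro: "\<forall>y. occ y p \<le> 1" "\<forall>y. occ y q \<le> 1"
    using ro_split[of p q] And.prems(2) by simp_all
  have nc: "\<not> has_const p" "\<not> has_const q" using And.prems(1) by auto
  have dis: "\<forall>y\<in>fvars p. y \<notin> fvars q"
  proof
    fix y assume "y \<in> fvars p"
    then have "occ y p > 0" by (simp add: fvars_occ)
    moreover have "occ y p + occ y q \<le> 1" using And.prems(2)[rule_format, of y] by simp
    ultimately show "y \<notin> fvars q" by (simp add: fvars_occ)
  qed
  have qne: "fvars q \<noteq> {}" "fvars p \<noteq> {}"
    using fvars_nonempty nc by blast+
  show ?case
  proof (cases "x \<in> fvars p")
    case True
    then have xq: "x \<notin> fvars q" using dis by blast
    obtain c p' where p': "fvars p' = fvars p - {x}" "fvars p' \<noteq> {} \<longrightarrow> \<not> has_const p'"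
      "fvars p' = {} \<longrightarrow> p' = cst True" "\<forall>y. occ y p' \<le> occ y p"
      "\<forall>\<sigma>. \<sigma> x = c \<longrightarrow> eval \<sigma> p' = eval \<sigma> p"
      using And.IH(1)[OF nc(1) ro(1) True, of True] by blast
    show ?thesis
    proof (cases "fvars p' = {}")
      case True
      then show ?thesis using p' xq qne nc
        by (rule_tac x=c in exI, rule_tac x=q in exI) auto
    next
      case False
      then show ?thesis using p' xq qne nc
        by (rule_tac x=c in exI, rule_tac x="And p' q" in exI) (auto simp: add_mono)
    qed
  next
    case False
    then have xq: "x \<in> fvars q" using And.prems(3) by simp
    obtain c q' where q': "fvars q' = fvars q - {x}" "fvars q' \<noteq> {} \<longrightarrow> \<not> has_const q'"
      "fvars q' = {} \<longrightarrow> q' = cst True" "\<forall>y. occ y q' \<le> occ y q"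
      "\<forall>\<sigma>. \<sigma> x = c \<longrightarrow> eval \<sigma> q' = eval \<sigma> q"
      using And.IH(2)[OF nc(2) ro(2) xq, of True] by blast
    show ?thesis
    proof (cases "fvars q' = {}")
      case True
      then show ?thesis using q' False qne nc
        by (rule_tac x=c in exI, rule_tac x=p in exI) auto
    next
      case F2: False
      then show ?thesis using q' False qne nc
        by (rule_tac x=c in exI, rule_tac x="And p q'" in exI) (auto simp: add_mono)
    qed
  qed
next
  case (Or p q)
  have ro: "\<forall>y. occ y p \<le> 1" "\<forall>y. occ y q \<le> 1"
    using ro_split[of p q] Or.prems(2) by simp_all
  have nc: "\<not> has_const p" "\<not> has_const q" using Or.prems(1) by auto
  have dis: "\<forall>y\<in>fvars p. y \<notin> fvars q"
  proof
    fix y assume "y \<in> fvars p"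
    then have "occ y p > 0" by (simp add: fvars_occ)
    moreover have "occ y p + occ y q \<le> 1" using Or.prems(2)[rule_format, of y] by simp
    ultimately show "y \<notin> fvars q" by (simp add: fvars_occ)
  qed
  have qne: "fvars q \<noteq> {}" "fvars p \<noteq> {}"
    using fvars_nonempty nc by blast+
  show ?case
  proof (cases "x \<in> fvars p")
    case True
    then have xq: "x \<notin> fvars q" using dis by blast
    obtain c p' where p': "fvars p' = fvars p - {x}" "fvars p' \<noteq> {} \<longrightarrow> \<not> has_const p'"
      "fvars p' = {} \<longrightarrow> p' = cst False" "\<forall>y. occ y p' \<le> occ y p"
      "\<forall>\<sigma>. \<sigma> x = c \<longrightarrow> eval \<sigma> p' = eval \<sigma> p"
      using Or.IH(1)[OF nc(1) ro(1) True, of False] by blast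
    show ?thesis
    proof (cases "fvars p' = {}")
      case True
      then show ?thesis using p' xq qne nc
        by (rule_tac x=c in exI, rule_tac x=q in exI) auto
    next
      case False
      then show ?thesis using p' xq qne nc
        by (rule_tac x=c in exI, rule_tac x="Or p' q" in exI) (auto simp: add_mono)
    qed
  next
    case False
    then have xq: "x \<in> fvars q" using Or.prems(3) by simp
    obtain c q' where q': "fvars q' = fvars q - {x}" "fvars q' \<noteq> {} \<longrightarrow> \<not> has_const q'"
      "fvars q' = {} \<longrightarrow> q' = cst False" "\<forall>y. occ y q' \<le> occ y q"
      "\<forall>\<sigma>. \<sigma> x = c \<longrightarrow> eval \<sigma> q' = eval \<sigma> q"
      using Or.IH(2)[OF nc(2) ro(2) xq, of False] by blast
    show ?thesis
    proof (cases "fvars q' = {}")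
      case True
      then show ?thesis using q' False qne nc
        by (rule_tac x=c in exI, rule_tac x=p in exI) auto
    next
      case F2: False
      then show ?thesis using q' False qne nc
        by (rule_tac x=c in exI, rule_tac x="Or p q'" in exI) (auto simp: add_mono)
    qed
  qed
next
  case (Neg p)
  have ro: "\<forall>y. occ y p \<le> 1" using Neg.prems(2) by simp
  have nc: "\<not> has_const p" using Neg.prems(1) by auto
  have xp: "x \<in> fvars p" using Neg.prems(3) by simp
  from Neg.IH[OF nc ro xp, where b="\<not> b"]
  obtain c p' where p': "fvars p' = fvars p - {x}" "fvars p' \<noteq> {} \<longrightarrow> \<not> has_const p'"
      "fvars p' = {} \<longrightarrow> p' = cst (\<not> b)" "\<forall>y. occ y p' \<le> occ y p"
      "\<forall>\<sigma>. \<sigma> x = c \<longrightarrow> eval \<sigma> p' = eval \<sigma> p"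
    by (elim exE conjE) blast
  show ?case
  proof (cases "fvars p' = {}")
    case True
    then show ?thesis using p'
      by (rule_tac x=c in exI, rule_tac x="cst b" in exI) auto
  next
    case False
    then show ?thesis using p'
      by (rule_tac x=c in exI, rule_tac x="Neg p'" in exI) auto
  qed
qed

lemma main:
  "finite I \<Longrightarrow> (\<forall>y. (\<Sum>i\<in>I. occ y (F i)) \<le> 1) \<Longrightarrow>
   (\<forall>i\<in>I. fvars (F i) \<noteq> {} \<longrightarrow> \<not> has_const (F i)) \<Longrightarrow> path_read_once B \<Longrightarrow>
   (\<forall>\<sigma>. \<forall>i\<in>I. run \<sigma> B i = eval \<sigma> (F i)) \<Longrightarrow>
   card (\<Union>i\<in>I. fvars (F i)) \<le> depth B"
proof (induction B arbitrary: F)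
  case (Leaf o')
  show ?case
  proof (rule ccontr)
    assume a: "\<not> ?thesis"
    have "card (\<Union>i\<in>I. fvars (F i)) \<noteq> 0" using a by simp
    then have "(\<Union>i\<in>I. fvars (F i)) \<noteq> {}" by (rule contrapos_nn) simp
    then obtain i where i: "i \<in> I" "fvars (F i) \<noteq> {}" by blast
    have ro: "\<forall>y. occ y (F i) \<le> 1"
    proof
      fix y
      have "occ y (F i) \<le> (\<Sum>i\<in>I. occ y (F i))"
        by (rule member_le_sum) (use i Leaf.prems(1) in auto)
      then show "occ y (F i) \<le> 1" using Leaf.prems(2)[rule_format, of y] by linarith
    qed
    have nc: "\<not> has_const (F i)" using Leaf.prems(3) i by blast
    obtain s1 where s1: "eval s1 (F i) = True" using nonconst[OF nc ro] by blast
    obtain s2 where s2: "eval s2 (F i) = False" using nonconst[OF nc ro] by blast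
    have "run s1 (Leaf o') i = eval s1 (F i)" using Leaf.prems(5) i(1) by blast
    moreover have "run s2 (Leaf o') i = eval s2 (F i)" using Leaf.prems(5) i(1) by blast
    ultimately show False using s1 s2 by simp
  qed
next
  case (Node x lo hi)
  let ?V = "\<Union>i\<in>I. fvars (F i)"
  have fin: "finite ?V" using Node.prems(1) by simp
  show ?case
  proof (cases "x \<in> ?V")
    case False
    have "\<forall>\<sigma>. \<forall>i\<in>I. run \<sigma> lo i = eval \<sigma> (F i)"
    proof (intro allI ballI)
      fix \<sigma> i assume i: "i \<in> I"
      have "run \<sigma> lo = run (\<sigma>(x:=False)) lo" by (rule run_cong) (use Node.prems(4) in auto)
      also have "\<dots> = run (\<sigma>(x:=False)) (Node x lo hi)" by simp
      finally have e1: "run \<sigma> lo = run (\<sigma>(x:=False)) (Node x lo hi)" .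
      have e2: "run (\<sigma>(x:=False)) (Node x lo hi) i = eval (\<sigma>(x:=False)) (F i)"
        using Node.prems(5) i by blast
      have "run \<sigma> lo i = eval (\<sigma>(x:=False)) (F i)" using e1 e2 by simp
      also have "\<dots> = eval \<sigma> (F i)" by (rule eval_cong) (use False i in auto)
      finally show "run \<sigma> lo i = eval \<sigma> (F i)" .
    qed
    then have "card ?V \<le> depth lo"
      using Node.IH(1)[OF Node.prems(1) Node.prems(2) Node.prems(3)] Node.prems(4) by simp
    then show ?thesis by simp
  next
    case True
    then obtain j where j: "j \<in> I" "x \<in> fvars (F j)" by auto
    have roj: "\<forall>y. occ y (F j) \<le> 1"
    proof
      fix y
      have "occ y (F j) \<le> (\<Sum>i\<in>I. occ y (F i))"
        by (rule member_le_sum) (use j Node.prems(1) in auto)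
      then show "occ y (F j) \<le> 1" using Node.prems(2)[rule_format, of y] by linarith
    qed
    have ncj: "\<not> has_const (F j)" using Node.prems(3) j by blast
    have oth: "\<And>i. i \<in> I \<Longrightarrow> i \<noteq> j \<Longrightarrow> x \<notin> fvars (F i)"
    proof
      fix i assume i: "i \<in> I" "i \<noteq> j" "x \<in> fvars (F i)"
      have s: "(\<Sum>k\<in>I. occ x (F k)) = occ x (F j) + (\<Sum>k\<in>I-{j}. occ x (F k))"
        using sum.remove[OF Node.prems(1) j(1)] by blast
      have "occ x (F i) \<le> (\<Sum>k\<in>I-{j}. occ x (F k))"
        by (rule member_le_sum) (use i Node.prems(1) in auto)
      moreover have "occ x (F i) > 0" "occ x (F j) > 0" using i(3) j(2) by (auto simp: fvars_occ)
      ultimately have "(\<Sum>k\<in>I. occ x (F k)) \<ge> 2" using s by linarith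
      then show False using Node.prems(2)[rule_format, of x] by linarith
    qed
    obtain c \<phi>' where r: "fvars \<phi>' = fvars (F j) - {x}" "fvars \<phi>' \<noteq> {} \<longrightarrow> \<not> has_const \<phi>'"
      "\<forall>y. occ y \<phi>' \<le> occ y (F j)" "\<forall>\<sigma>. \<sigma> x = c \<longrightarrow> eval \<sigma> \<phi>' = eval \<sigma> (F j)"
      using reduce[OF ncj roj j(2), of True] by blast
    define F' where "F' = F(j := \<phi>')"
    define ch where "ch = (if c then hi else lo)"
    have V': "(\<Union>i\<in>I. fvars (F' i)) = ?V - {x}"
      using r(1) oth j unfolding F'_def
      apply -
      apply (rule set_eqI)
      apply (simp split: if_splits)
      apply (metis DiffE DiffI singletonD)
      done
    have ro': "\<forall>y. (\<Sum>i\<in>I. occ y (F' i)) \<le> 1"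
    proof
      fix y
      have "(\<Sum>i\<in>I. occ y (F' i)) \<le> (\<Sum>i\<in>I. occ y (F i))"
        by (rule sum_mono) (use r(3) in \<open>auto simp: F'_def\<close>)
      then show "(\<Sum>i\<in>I. occ y (F' i)) \<le> 1" using Node.prems(2)[rule_format, of y] by linarith
    qed
    have nc': "\<forall>i\<in>I. fvars (F' i) \<noteq> {} \<longrightarrow> \<not> has_const (F' i)"
      using Node.prems(3) r(2) by (auto simp: F'_def)
    have pro: "path_read_once ch" "x \<notin> tvars ch" using Node.prems(4) by (auto simp: ch_def)
    have corr: "\<forall>\<sigma>. \<forall>i\<in>I. run \<sigma> ch i = eval \<sigma> (F' i)"
    proof (intro allI ballI)
      fix \<sigma> i assume i: "i \<in> I"
      have "run \<sigma> ch = run (\<sigma>(x:=c)) ch" by (rule run_cong) (use pro(2) in auto)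
      also have "\<dots> = run (\<sigma>(x:=c)) (Node x lo hi)" by (simp add: ch_def)
      finally have e1: "run \<sigma> ch = run (\<sigma>(x:=c)) (Node x lo hi)" .
      have e2: "run (\<sigma>(x:=c)) (Node x lo hi) i = eval (\<sigma>(x:=c)) (F i)"
        using Node.prems(5) i by blast
      have e: "run \<sigma> ch i = eval (\<sigma>(x:=c)) (F i)" using e1 e2 by simp
      show "run \<sigma> ch i = eval \<sigma> (F' i)"
      proof (cases "i = j")
        case True
        have "eval (\<sigma>(x:=c)) (F i) = eval (\<sigma>(x:=c)) \<phi>'" using r(4) True by simp
        also have "\<dots> = eval \<sigma> \<phi>'" by (rule eval_cong) (use r(1) in auto)
        finally show ?thesis using e True by (simp add: F'_def)
      next
        case False
        have "eval (\<sigma>(x:=c)) (F i) = eval \<sigma> (F i)" by (rule eval_cong) (use oth[OF i False] in auto)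
        then show ?thesis using e False by (simp add: F'_def)
      qed
    qed
    have IHc: "card (\<Union>i\<in>I. fvars (F' i)) \<le> depth ch"
    proof (cases c)
      case True
      then have "ch = hi" by (simp add: ch_def)
      then show ?thesis using Node.IH(2)[OF Node.prems(1) ro' nc'] pro corr by blast
    next
      case False
      then have "ch = lo" by (simp add: ch_def)
      then show ?thesis using Node.IH(1)[OF Node.prems(1) ro' nc'] pro corr by blast
    qed
    have "card (?V - {x}) \<le> depth ch" using IHc V' by simp
    moreover have "card ?V = card (?V - {x}) + 1"
    proof -
      have c1: "card (?V - {x}) = card ?V - 1" using True fin by (simp add: card_Diff_singleton)
      have c2: "card ?V > 0" using True fin card_gt_0_iff by blast
      show ?thesis using c1 c2 by linarith
    qed
    moreover have "depth ch \<le> max (depth lo) (depth hi)" by (simp add: ch_def)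
    ultimately show ?thesis by simp
  qed
qed

theorem proposition2:
  fixes \<Phi> :: "'v form set"
  assumes "finite \<Phi>" and "\<Phi> \<noteq> {}"
    and "overall_read_once \<Phi>"
    and "\<forall>\<phi>\<in>\<Phi>. non_simplifiable \<phi>"
  shows "evasive \<Phi> (vars_of \<Phi>)"
  unfolding evasive_def
proof (intro allI impI)
  fix B assume B: "is_bdd_for \<Phi> (vars_of \<Phi>) B"
  have finX: "finite (vars_of \<Phi>)" using assms(1) by (simp add: vars_of_def)
  have ro: "\<forall>y. (\<Sum>i\<in>\<Phi>. occ y (id i)) \<le> 1"
  proof
    fix y
    show "(\<Sum>i\<in>\<Phi>. occ y (id i)) \<le> 1"
    proof (cases "y \<in> vars_of \<Phi>")
      case True then show ?thesis using assms(3) by (simp add: overall_read_once_def)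
    next
      case False
      then have "\<forall>i\<in>\<Phi>. occ y i = 0" by (auto simp: vars_of_def fvars_occ)
      then show ?thesis by simp
    qed
  qed
  have nc: "\<forall>i\<in>\<Phi>. fvars (id i) \<noteq> {} \<longrightarrow> \<not> has_const (id i)"
    using assms(4) by (auto simp: non_simplifiable_def)
  have "card (vars_of \<Phi>) \<le> depth B"
    using main[OF assms(1) ro nc, of B] B by (simp add: is_bdd_for_def vars_of_def)
  moreover have "depth B \<le> card (vars_of \<Phi>)"
    using depth_le[of B] B finX card_mono[OF finX, of "tvars B"] by (simp add: is_bdd_for_def)
  ultimately show "depth B = card (vars_of \<Phi>)" by simp
qed

end
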